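(* Let $v:\mathbf S\to\mathbb R_{\ge 0}$ be submodular over signals (SOS). If $v$ is monotone, then $v$ is self-bounding (i.e. $1$-self-bounding). In general (without monotonicity), $v$ is $2$-self-bounding.
   Context: There are $n$ bidders; each signal space $S_i\subseteq\mathbb R$ is totally ordered, $\mathbf S=S_1\times\cdots\times S_n$. For $\mathbf s\in\mathbf S$, $\mathbf s_{-i}$ denotes the profile without coordinate $i$ and $(o_i,\mathbf s_{-i})$ the profile with $s_i$ replaced by $o_i\in S_i$. Write $\mathbf s\succeq\mathbf t$ if $s_i\ge t_i$ for all $i$. A function $v:\mathbf S\to\mathbb R_{\ge0}$ is monotone if $v(\mathbf s)\ge v(\mathbf t)$ whenever $\mathbf s\succeq\mathbf t$. It is submodular over signals (SOS) if for every $i\in[n]$, every $\mathbf s\succeq\mathbf t$: $v(s_i,\mathbf s_{-i})-v(t_i,\mathbf s_{-i})\le v(s_i,\mathbf t_{-i})-v(t_i,\mathbf t_{-i})$. The lower estimate is $\underline v^{(i)}(\mathbf s)=\inf_{o_i\in S_i}v(o_i,\mathbf s_{-i})$. For $d\in[n]$, $v$ is $d$-self-bounding if for every $\mathbf s\in\mathbf S$, $\sum_{i=1}^n\big(v(\mathbf s)-\underline v^{(i)}(\mathbf s)\big)\le d\cdot v(\mathbf s)$; it is self-bounding if this holds with $d=1$. *)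

theory Defs
  imports Complex_Main "HOL-Library.FuncSet"
begin

text \<open>Bidders are indexed by 0..n-1. The signal space of bidder i is S i (a set of reals).
  A signal profile is an extensional function in PiE {..<n} S.\<close>

definition profiles :: "nat \<Rightarrow> (nat \<Rightarrow> real set) \<Rightarrow> (nat \<Rightarrow> real) set" where
  "profiles n S = PiE {..<n} S"

definition dominates :: "nat \<Rightarrow> (nat \<Rightarrow> real) \<Rightarrow> (nat \<Rightarrow> real) \<Rightarrow> bool" where
  "dominates n s t \<longleftrightarrow> (\<forall>i<n. t i \<le> s i)"

definition nonneg_valuation :: "nat \<Rightarrow> (nat \<Rightarrow> real set) \<Rightarrow> ((nat \<Rightarrow> real) \<Rightarrow> real) \<Rightarrow> bool" where
  "nonneg_valuation n S v \<longleftrightarrow> (\<forall>s\<in>profiles n S. 0 \<le> v s)"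

definition monotone_val :: "nat \<Rightarrow> (nat \<Rightarrow> real set) \<Rightarrow> ((nat \<Rightarrow> real) \<Rightarrow> real) \<Rightarrow> bool" where
  "monotone_val n S v \<longleftrightarrow>
     (\<forall>s\<in>profiles n S. \<forall>t\<in>profiles n S. dominates n s t \<longrightarrow> v t \<le> v s)"

text \<open>Submodular over signals: v(s_i,s_{-i}) - v(t_i,s_{-i}) <= v(s_i,t_{-i}) - v(t_i,t_{-i}).\<close>
definition SOS :: "nat \<Rightarrow> (nat \<Rightarrow> real set) \<Rightarrow> ((nat \<Rightarrow> real) \<Rightarrow> real) \<Rightarrow> bool" where
  "SOS n S v \<longleftrightarrow>
     (\<forall>i<n. \<forall>s\<in>profiles n S. \<forall>t\<in>profiles n S. dominates n s t \<longrightarrow>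
        v s - v (s(i := t i)) \<le> v (t(i := s i)) - v t)"

definition lower_estimate ::
  "(nat \<Rightarrow> real set) \<Rightarrow> ((nat \<Rightarrow> real) \<Rightarrow> real) \<Rightarrow> nat \<Rightarrow> (nat \<Rightarrow> real) \<Rightarrow> real" where
  "lower_estimate S v i s = (INF x\<in>S i. v (s(i := x)))"

definition self_bounding_with ::
  "nat \<Rightarrow> (nat \<Rightarrow> real set) \<Rightarrow> real \<Rightarrow> ((nat \<Rightarrow> real) \<Rightarrow> real) \<Rightarrow> bool" where
  "self_bounding_with n S d v \<longleftrightarrow>
     (\<forall>s\<in>profiles n S. (\<Sum>i<n. v s - lower_estimate S v i s) \<le> d * v s)"

end

theory Submission
  imports Defs
begin

lemma upd_prof:
  assumes "s \<in> profiles n S" "i < n" "x \<in> S i"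
  shows "s(i := x) \<in> profiles n S"
  using assms by (auto simp: profiles_def PiE_iff extensional_def)

definition ovr :: "(nat \<Rightarrow> real) \<Rightarrow> (nat \<Rightarrow> real) \<Rightarrow> nat set \<Rightarrow> nat \<Rightarrow> real" where
  "ovr s w I = (\<lambda>j. if j \<in> I then w j else s j)"

lemma ovr_prof:
  assumes "s \<in> profiles n S" "w \<in> profiles n S" "I \<subseteq> {..<n}"
  shows "ovr s w I \<in> profiles n S"
  using assms by (auto simp: profiles_def PiE_iff extensional_def ovr_def)

lemma tele:
  assumes sos: "SOS n S v" and s: "s \<in> profiles n S" and w: "w \<in> profiles n S"
    and fin: "finite I" and sub: "I \<subseteq> {..<n}"
    and dir: "(\<forall>i\<in>I. w i \<le> s i) \<or> (\<forall>i\<in>I. s i \<le> w i)"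
  shows "(\<Sum>i\<in>I. v s - v (s(i := w i))) \<le> v s - v (ovr s w I)"
  using fin sub dir
proof (induction I rule: finite_induct)
  case empty
  then show ?case by (simp add: ovr_def)
next
  case (insert k I)
  have kn: "k < n" using insert by auto
  have IH: "(\<Sum>i\<in>I. v s - v (s(i := w i))) \<le> v s - v (ovr s w I)"
    using insert.IH insert.prems by blast
  let ?t = "ovr s w (insert k I)"
  have tp: "?t \<in> profiles n S" using ovr_prof[OF s w] insert by auto
  have e1: "?t(k := s k) = ovr s w I" using insert(2) by (auto simp: ovr_def)
  have e2: "?t k = w k" by (simp add: ovr_def)
  have e3: "?t(k := s k) = ovr s w I" using e1 .
  have step: "v s - v (s(k := w k)) \<le> v (ovr s w I) - v ?t"
  proof (cases "\<forall>i\<in>insert k I. w i \<le> s i")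
    case True
    have "dominates n s ?t" using True by (auto simp: dominates_def ovr_def)
    hence "v s - v (s(k := ?t k)) \<le> v (?t(k := s k)) - v ?t"
      using sos kn s tp unfolding SOS_def by blast
    thus ?thesis using e1 e2 by simp
  next
    case False
    hence up: "\<forall>i\<in>insert k I. s i \<le> w i" using insert.prems by blast
    have "dominates n ?t s" using up by (auto simp: dominates_def ovr_def)
    hence "v ?t - v (?t(k := s k)) \<le> v (s(k := ?t k)) - v s"
      using sos kn s tp unfolding SOS_def by blast
    thus ?thesis using e1 e2 by simp
  qed
  have "(\<Sum>i\<in>insert k I. v s - v (s(i := w i))) = (v s - v (s(k := w k))) + (\<Sum>i\<in>I. v s - v (s(i := w i)))"
    using insert(1,2) by (rule sum.insert)
  then show ?case using IH step by linarith
qed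

lemma core:
  assumes nn: "nonneg_valuation n S v" and sos: "SOS n S v" and s: "s \<in> profiles n S"
    and w: "w \<in> profiles n S"
  shows "(\<Sum>i<n. v s - v (s(i := w i))) \<le> 2 * v s"
    and "(\<forall>i<n. w i \<le> s i) \<Longrightarrow> (\<Sum>i<n. v s - v (s(i := w i))) \<le> v s"
proof -
  define D where "D = {i. i < n \<and> w i \<le> s i}"
  define U where "U = {i. i < n \<and> \<not> w i \<le> s i}"
  have D: "finite D" "D \<subseteq> {..<n}" and U: "finite U" "U \<subseteq> {..<n}"
    by (auto simp: D_def U_def)
  have "{..<n} = D \<union> U" "D \<inter> U = {}" by (auto simp: D_def U_def)
  hence split: "(\<Sum>i<n. v s - v (s(i := w i))) = (\<Sum>i\<in>D. v s - v (s(i := w i))) + (\<Sum>i\<in>U. v s - v (s(i := w i)))"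
    using D U by (simp add: sum.union_disjoint)
  have "(\<Sum>i\<in>D. v s - v (s(i := w i))) \<le> v s - v (ovr s w D)"
    by (rule tele[OF sos s w D]) (auto simp: D_def)
  moreover have "0 \<le> v (ovr s w D)" using nn ovr_prof[OF s w D(2)] by (auto simp: nonneg_valuation_def)
  ultimately have d: "(\<Sum>i\<in>D. v s - v (s(i := w i))) \<le> v s" by simp
  have "(\<Sum>i\<in>U. v s - v (s(i := w i))) \<le> v s - v (ovr s w U)"
    by (rule tele[OF sos s w U]) (auto simp: U_def)
  moreover have "0 \<le> v (ovr s w U)" using nn ovr_prof[OF s w U(2)] by (auto simp: nonneg_valuation_def)
  ultimately have u: "(\<Sum>i\<in>U. v s - v (s(i := w i))) \<le> v s" by simp
  show "(\<Sum>i<n. v s - v (s(i := w i))) \<le> 2 * v s" using split d u by simp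
  assume "\<forall>i<n. w i \<le> s i"
  hence "U = {}" by (auto simp: U_def)
  thus "(\<Sum>i<n. v s - v (s(i := w i))) \<le> v s" using split d by simp
qed

lemma approx:
  assumes nn: "nonneg_valuation n S v" and s: "s \<in> profiles n S" and e: "e > 0"
  shows "\<exists>w\<in>profiles n S. \<forall>i<n. v (s(i := w i)) < lower_estimate S v i s + e"
proof -
  have "\<forall>i<n. \<exists>x\<in>S i. v (s(i := x)) < lower_estimate S v i s + e"
  proof (intro allI impI)
    fix i assume i: "i < n"
    have ne: "S i \<noteq> {}" using s i by (auto simp: profiles_def PiE_iff)
    have bdd: "bdd_below ((\<lambda>x. v (s(i := x))) ` S i)"
      using nn upd_prof[OF s i] by (auto simp: bdd_below_def nonneg_valuation_def intro!: exI[of _ 0])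
    have "Inf ((\<lambda>x. v (s(i := x))) ` S i) < lower_estimate S v i s + e"
      using e by (simp add: lower_estimate_def)
    then show "\<exists>x\<in>S i. v (s(i := x)) < lower_estimate S v i s + e"
      using ne bdd by (subst (asm) cInf_less_iff) auto
  qed
  then obtain f where f: "\<forall>i<n. f i \<in> S i \<and> v (s(i := f i)) < lower_estimate S v i s + e"
    by metis
  have "restrict f {..<n} \<in> profiles n S" using f by (auto simp: profiles_def)
  thus ?thesis using f by (intro bexI[of _ "restrict f {..<n}"]) auto
qed

lemma sum_bound:
  assumes "\<forall>i<n. v (s(i := w i)) < lower_estimate S v i s + e"
  shows "(\<Sum>i<n. v s - lower_estimate S v i s) \<le> (\<Sum>i<n. v s - v (s(i := w i))) + real n * e"
proof -
  have "(\<Sum>i<n. v s - lower_estimate S v i s) \<le> (\<Sum>i<n. v s - v (s(i := w i)) + e)"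
    using assms by (intro sum_mono) (auto intro: less_imp_le)
  thus ?thesis by (simp add: sum.distrib)
qed

theorem mainTheorem1:
  fixes n :: nat and S :: "nat \<Rightarrow> real set" and v :: "(nat \<Rightarrow> real) \<Rightarrow> real"
  assumes "nonneg_valuation n S v" and "SOS n S v"
  shows "(monotone_val n S v \<longrightarrow> self_bounding_with n S 1 v) \<and> self_bounding_with n S 2 v"
proof
  note nn = assms(1) and sos = assms(2)
  show "self_bounding_with n S 2 v"
    unfolding self_bounding_with_def
  proof
    fix s assume s: "s \<in> profiles n S"
    show "(\<Sum>i<n. v s - lower_estimate S v i s) \<le> 2 * v s"
    proof (rule field_le_epsilon)
      fix e :: real assume e: "0 < e"
      have e': "e / (real n + 1) > 0" using e by simp
      obtain w where w: "w \<in> profiles n S" and ob: "\<forall>i<n. v (s(i := w i)) < lower_estimate S v i s + e / (real n + 1)"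
        using approx[OF nn s e'] by blast
      have "real n * (e / (real n + 1)) \<le> e" using e by (simp add: field_simps)
      thus "(\<Sum>i<n. v s - lower_estimate S v i s) \<le> 2 * v s + e"
        using sum_bound[OF ob] core(1)[OF nn sos s w] by linarith
    qed
  qed
  show "monotone_val n S v \<longrightarrow> self_bounding_with n S 1 v"
    unfolding self_bounding_with_def
  proof (intro impI ballI)
    assume mono: "monotone_val n S v"
    fix s assume s: "s \<in> profiles n S"
    show "(\<Sum>i<n. v s - lower_estimate S v i s) \<le> 1 * v s"
    proof (rule field_le_epsilon)
      fix e :: real assume e: "0 < e"
      have e': "e / (real n + 1) > 0" using e by simp
      obtain w where w: "w \<in> profiles n S" and ob: "\<forall>i<n. v (s(i := w i)) < lower_estimate S v i s + e / (real n + 1)"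
        using approx[OF nn s e'] by blast
      define w' where "w' = (\<lambda>j. if j < n then min (w j) (s j) else undefined)"
      have w': "w' \<in> profiles n S" using w s
        by (auto simp: profiles_def PiE_iff w'_def min_def extensional_def)
      have ob': "\<forall>i<n. v (s(i := w' i)) < lower_estimate S v i s + e / (real n + 1)"
      proof (intro allI impI)
        fix i assume i: "i < n"
        have "v (s(i := w' i)) \<le> v (s(i := w i))"
        proof (cases "w i \<le> s i")
          case True thus ?thesis using i by (simp add: w'_def)
        next
          case False
          hence "w' i = s i" using i by (simp add: w'_def)
          moreover have "s(i := s i) = s" by simp
          moreover have "dominates n (s(i := w i)) s" using False by (auto simp: dominates_def)
          moreover have "s(i := w i) \<in> profiles n S"
            using upd_prof[OF s i] w i by (auto simp: profiles_def)
          ultimately show ?thesis using mono s unfolding monotone_val_def by metis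
        qed
        thus "v (s(i := w' i)) < lower_estimate S v i s + e / (real n + 1)" using ob i by force
      qed
      have le: "\<forall>i<n. w' i \<le> s i" by (simp add: w'_def)
      have "real n * (e / (real n + 1)) \<le> e" using e by (simp add: field_simps)
      thus "(\<Sum>i<n. v s - lower_estimate S v i s) \<le> 1 * v s + e"
        using sum_bound[OF ob'] core(2)[OF nn sos s w' le] by linarith
    qed
  qed
qed

end
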